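(* Let $\varsigma$ and $\omega$ be regular axially symmetric functions on the unit sphere $S^2$ (functions of $\theta\in[0,\pi]$) such that $$\mathcal M=\int_0^\pi\left(|\partial_\theta\varsigma|^2+4\varsigma+\frac{|\partial_\theta\omega|^2}{\eta^2}\right)\sin\theta\,d\theta,\qquad \eta=e^{\varsigma}\sin^2\theta,$$ is finite, and assume $\partial_\theta\omega=0$ at $\theta=0$ and $\theta=\pi$. Then $$\mathcal M\ge 8\big(\ln(2|J|)+1\big),\qquad\text{where } J=\tfrac18\big(\omega(\pi)-\omega(0)\big).$$ *)

theory Defs
  imports "HOL-Analysis.Analysis"
begin

text \<open>A regular axially symmetric function on the unit sphere, viewed as a function of
  the polar angle, is smooth (all iterated derivatives exist) at every point of the
  closed interval [0, pi].\<close>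
definition regular_axisym :: "(real \<Rightarrow> real) \<Rightarrow> bool" where
  "regular_axisym f \<longleftrightarrow> (\<forall>k::nat. \<forall>x\<in>{0..pi}. ((deriv ^^ k) f) differentiable (at x))"

definition eta_fun :: "(real \<Rightarrow> real) \<Rightarrow> real \<Rightarrow> real" where
  "eta_fun s \<theta> = exp (s \<theta>) * (sin \<theta>)^2"

definition mass_integrand :: "(real \<Rightarrow> real) \<Rightarrow> (real \<Rightarrow> real) \<Rightarrow> real \<Rightarrow> real" where
  "mass_integrand s w \<theta> =
     ((deriv s \<theta>)^2 + 4 * s \<theta> + (deriv w \<theta>)^2 / (eta_fun s \<theta>)^2) * sin \<theta>"

definition mass_functional :: "(real \<Rightarrow> real) \<Rightarrow> (real \<Rightarrow> real) \<Rightarrow> real" where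
  "mass_functional s w = integral {0..pi} (mass_integrand s w)"

end

theory Submission
  imports Defs "HOL-Real_Asymp.Real_Asymp"
begin

lemma reg_deriv:
  assumes "regular_axisym f" "x \<in> {0..pi}"
  shows "(f has_real_derivative deriv f x) (at x)"
proof -
  have "((deriv ^^ 0) f) differentiable (at x)" using assms unfolding regular_axisym_def by blast
  thus ?thesis by (simp add: DERIV_deriv_iff_real_differentiable)
qed

lemma reg_cont:
  assumes "regular_axisym f"
  shows "continuous_on {0..pi} f" "continuous_on {0..pi} (deriv f)"
proof -
  show "continuous_on {0..pi} f"
    by (intro continuous_at_imp_continuous_on ballI DERIV_isCont[OF reg_deriv[OF assms]])
  have "\<And>x. x \<in> {0..pi} \<Longrightarrow> ((deriv ^^ 1) f) differentiable (at x)" 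
    using assms unfolding regular_axisym_def by blast
  then show "continuous_on {0..pi} (deriv f)"
    by (intro continuous_at_imp_continuous_on ballI differentiable_imp_continuous_within) auto
qed

lemma sin3_integral:
  fixes x :: real
  assumes "0 \<le> x"
  shows "((\<lambda>t. sin t ^ 3) has_integral (2/3 - cos x + cos x ^ 3 / 3)) {0..x}"
proof -
  have "((\<lambda>t. sin t ^ 3) has_integral ((- cos x + cos x ^ 3 / 3) - (- cos 0 + cos 0 ^ 3 / 3))) {0..x}"
  proof (rule fundamental_theorem_of_calculus[OF assms])
    fix t assume "t \<in> {0..x}"
    have "((\<lambda>t. - cos t + cos t ^ 3 / 3) has_real_derivative (sin t ^ 3)) (at t)"
      apply (auto intro!: derivative_eq_intros simp: power2_eq_square power3_eq_cube)
      using sin_cos_squared_add3[of t] by algebra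
    then show "((\<lambda>t. - cos t + cos t ^ 3 / 3) has_vector_derivative sin t ^ 3) (at t within {0..x})"
      by (simp add: has_real_derivative_iff_has_vector_derivative[symmetric] has_field_derivative_at_within)
  qed
  thus ?thesis by (simp add: algebra_simps)
qed

lemma xlnx_cont: "continuous_on {0..1} (\<lambda>x::real. x * ln x)"
proof -
  have "continuous (at x within {0..1}) (\<lambda>x::real. x * ln x)" if "x \<in> {0..1}" for x
  proof (cases "x = 0")
    case True
    have "((\<lambda>x::real. x * ln x) \<longlongrightarrow> 0) (at_right 0)" by real_asymp
    thus ?thesis using True by (simp add: continuous_within at_within_Icc_at_right)
  next
    case False
    with that have "x > 0" by auto
    hence "isCont (\<lambda>x::real. x * ln x) x" by (auto intro!: continuous_intros)
    thus ?thesis by (simp add: continuous_at_imp_continuous_within)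
  qed
  thus ?thesis by (simp add: continuous_on_eq_continuous_within)
qed

lemma zz_lemma: fixes z c sn :: real assumes "sn^2 = 1 - c^2" "z = (1-c)^2/(2*(1+c^2))" 
  shows "z*(1-z) = sn^4/(4*(1+c^2)^2)"
proof -
  have c2: "1 + c^2 > 0" by (simp add: add_pos_nonneg)
  have "sn^4 = (sn^2)^2" by simp
  hence s4: "sn^4 = (1-c^2)^2" using assms by simp
  have zc: "z*(2*(1+c^2)) = (1-c)^2" unfolding assms(2) using c2 by simp
  have "z*(1-z)*(4*(1+c^2)^2) = (1-c^2)^2" using zc by algebra
  thus ?thesis unfolding s4 using c2 by (simp add: field_simps)
qed

lemma e2_lemma: fixes d c sn sg sg' L :: real assumes "d \<noteq> 0"
  shows "c^2 * sn^3 / d^2 + 2 * L * (sn^3 / d^2) = (2 * sg' - 4 * c * sn / d)^2 * sn / 16 + (2 * sg + 2 * L) * (sn^3 / d^2)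
     - (1/4) * sg'^2 * sn - sg * sn + (1/2) * sg' * (2 * c * sn^2 / d) + (1/2) * sg * (2 * sn - 4 * (sn^3 / d^2))"
  using assms by (simp add: field_simps power2_eq_square power3_eq_cube)

lemma key_ineq:
  fixes sn c sg sg' p Y z A :: real
  assumes sn: "sn > 0" and sc: "sn^2 + c^2 = 1" and Y: "0 < Y" "Y < 1" and z: "0 < z" "z < 1" and A: "A > 0"
    and zdef: "z = (1-c)^2/(2*(1+c^2))"
    and pdef: "p = exp (2 * sg) * sn^3 / A"
  shows "4 * ln A * p \<le> sg'^2 * sn + 4 * sg * sn + 4 * (c^2 * sn^3 / (1+c^2)^2 + 2 * ln (1+c^2) * (sn^3 / (1+c^2)^2))
     + 4 * ((2 * sg' - 4 * c * sn / (1+c^2)) * (Y-z) + (2 * sg + 2 * ln (1+c^2)) * (p - sn^3 / (1+c^2)^2)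
          + (-1 - (ln Y + ln (1-Y) - ln z - ln (1-z))) * p + (-1 + Y/z + (1-Y)/(1-z)) * (sn^3 / (1+c^2)^2)
          - (1/2) * sg' * (2 * c * sn^2 / (1+c^2)) - (1/2) * sg * (2 * sn - 4 * (sn^3 / (1+c^2)^2)))"
proof -
  define z' where "z' = sn^3 / (1+c^2)^2"
  define u where "u = 2 * sg + 2 * ln (1+c^2)"
  define u' where "u' = 2 * sg' - 4 * c * sn / (1+c^2)"
  define lam where "lam = Y * (1-Y) / (z * (1-z))"
  define f where "f = (Y-z)^2 / (z * (1-z))"
  define k0 where "k0 = c^2 * sn^3 / (1+c^2)^2 + 2 * ln (1+c^2) * z'"
  define Q where "Q = 2 * c * sn^2 / (1+c^2)"
  define Q' where "Q' = 2 * sn - 4 * z'"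
  have c2: "1 + c^2 > 0" by (simp add: add_pos_nonneg)
  have zp: "z' > 0" unfolding z'_def using sn c2 by simp
  have pp: "p > 0" unfolding pdef using sn A by simp
  have lamp: "lam > 0" unfolding lam_def using Y z by simp
  have s2: "sn^2 = 1 - c^2" using sc by simp
  have zz: "z * (1-z) = sn^4 / (4 * (1+c^2)^2)" using zz_lemma[OF s2 zdef] .
  have pz: "p / z' = exp (2 * sg) * (1+c^2)^2 / A" unfolding pdef z'_def using sn c2 A by (simp add: field_simps)
  have lnA: "ln A = u - ln (p / z')"
    unfolding pz u_def using c2 A by (simp add: ln_mult ln_div ln_realpow)
  have fz: "f * z' = 4 * (Y-z)^2 / sn"
  proof -
    have "f * z' = (Y-z)^2 * (4 * (1+c^2)^2) / sn^4 * (sn^3 / (1+c^2)^2)"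
      unfolding f_def zz z'_def by simp
    also have "\<dots> = 4 * (Y-z)^2 * ((1+c^2)^2 / (1+c^2)^2) * (sn^3 / sn^4)" by (simp add: field_simps)
    also have "sn^3 / sn^4 = 1 / sn" using sn by (simp add: field_simps power_eq_if)
    finally show ?thesis using c2 by simp
  qed
  have i1: "0 \<le> u'^2 * sn / 16 + u' * (Y-z) + f * z'"
  proof -
    have "0 \<le> (u' * sn / 4 + 2 * (Y-z))^2 / sn" using sn by simp
    also have "(u' * sn / 4 + 2 * (Y-z))^2 / sn = u'^2 * sn / 16 + u' * (Y-z) + 4 * (Y-z)^2 / sn"
      using sn by (simp add: field_simps power2_eq_square)
    finally show ?thesis using fz by simp
  qed
  have lnlam: "ln lam = ln Y + ln (1-Y) - ln z - ln (1-z)"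
    unfolding lam_def using Y z by (simp add: ln_mult ln_div)
  have i2: "0 \<le> lam * z' - p - p * (ln lam + ln z' - ln p)"
  proof -
    have "ln (lam * z' / p) \<le> lam * z' / p - 1" using lamp zp pp by (intro ln_le_minus_one) simp
    moreover have "ln (lam * z' / p) = ln lam + ln z' - ln p" using lamp zp pp by (simp add: ln_mult ln_div)
    ultimately have "p * (ln lam + ln z' - ln p) \<le> p * (lam * z' / p - 1)" using pp by simp
    also have "\<dots> = lam * z' - p" using pp by (simp add: field_simps)
    finally show ?thesis by simp
  qed
  have e1: "-1 + Y/z + (1-Y)/(1-z) = f + lam"
  proof -
    have nz: "z \<noteq> 0" "1 - z \<noteq> 0" using z by auto
    have d: "z * (1-z) \<noteq> 0" using nz by simp
    have a1: "f * (z * (1-z)) = (Y-z)^2" unfolding f_def using d by simp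
    have a2: "lam * (z * (1-z)) = Y * (1-Y)" unfolding lam_def using d by simp
    have a3: "Y/z * (z * (1-z)) = Y * (1-z)" using nz by simp
    have a4: "(1-Y)/(1-z) * (z * (1-z)) = (1-Y) * z" using nz by simp
    have "(-1 + Y/z + (1-Y)/(1-z)) * (z * (1-z)) = -(z * (1-z)) + Y/z * (z * (1-z)) + (1-Y)/(1-z) * (z * (1-z))"
      by (simp only: distrib_right)
    also have "\<dots> = (Y-z)^2 + Y * (1-Y)" unfolding a3 a4 by algebra
    also have "\<dots> = (f + lam) * (z * (1-z))" unfolding distrib_right a1 a2 ..
    finally have "(-1 + Y/z + (1-Y)/(1-z)) * (z * (1-z)) = (f + lam) * (z * (1-z))" .
    thus ?thesis using nz by simp
  qed
  have e2: "k0 = u'^2 * sn / 16 + u * z' - (1/4) * sg'^2 * sn - sg * sn + (1/2) * sg' * Q + (1/2) * sg * Q'"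
    unfolding u'_def u_def k0_def Q_def Q'_def z'_def using e2_lemma[of "1+c^2"] c2 by simp
  have lnpz: "ln (p / z') = ln p - ln z'" using pp zp by (simp add: ln_div)
  have "sg'^2 * sn + 4 * sg * sn + 4 * k0 + 4 * (u' * (Y-z) + u * (p - z') + (-1 - ln lam) * p + (f + lam) * z'
          - (1/2) * sg' * Q - (1/2) * sg * Q') - 4 * ln A * p
        = 4 * ((u'^2 * sn / 16 + u' * (Y-z) + f * z') + (lam * z' - p - p * (ln lam + ln z' - ln p)))"
    unfolding lnA lnpz e2 by algebra
  also have "\<dots> \<ge> 0" by (rule mult_nonneg_nonneg[OF _ add_nonneg_nonneg[OF i1 i2]]) simp
  finally have "4 * ln A * p \<le> sg'^2 * sn + 4 * sg * sn + 4 * k0 + 4 * (u' * (Y-z) + u * (p - z') + (-1 - ln lam) * p + (f + lam) * z'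
          - (1/2) * sg' * Q - (1/2) * sg * Q')" by simp
  thus ?thesis unfolding lnlam e1[symmetric] k0_def z'_def u'_def u_def Q_def Q'_def by simp
qed

lemma alnb_cont:
  fixes a b :: "real \<Rightarrow> real"
  assumes ca: "continuous_on S a" and cb: "continuous_on S b" and C: "C \<ge> 0"
    and ab: "\<And>x. x \<in> S \<Longrightarrow> 0 \<le> a x \<and> a x \<le> C * b x"
    and b01: "\<And>x. x \<in> S \<Longrightarrow> 0 \<le> b x \<and> b x \<le> 1"
  shows "continuous_on S (\<lambda>x. a x * ln (b x))"
proof -
  have E: "continuous_on S (\<lambda>y. b y * ln (b y))"
    using continuous_on_compose2[OF xlnx_cont cb] b01 by (force simp: image_subset_iff)
  have "continuous (at x within S) (\<lambda>x. a x * ln (b x))" if x: "x \<in> S" for x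
  proof (cases "b x = 0")
    case False
    hence bx: "b x > 0" using b01[OF x] by auto
    have "continuous (at x within S) (\<lambda>x. ln (b x))"
      by (rule continuous_within_compose3[where g=ln and f=b]) 
         (use bx continuous_on_eq_continuous_within cb x in \<open>auto intro!: continuous_intros\<close>)
    moreover have "continuous (at x within S) a" using ca x continuous_on_eq_continuous_within by blast
    ultimately show ?thesis by (metis (no_types) continuous_mult)
  next
    case True
    hence ax: "a x = 0" using ab[OF x] by (metis antisym mult_zero_right)
    have lim: "((\<lambda>y. C * \<bar>b y * ln (b y)\<bar>) \<longlongrightarrow> C * \<bar>b x * ln (b x)\<bar>) (at x within S)"
    proof -
      have "((\<lambda>y. b y * ln (b y)) \<longlongrightarrow> b x * ln (b x)) (at x within S)"
        using E x continuous_on_eq_continuous_within continuous_within by blast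
      thus ?thesis by (intro tendsto_mult_left tendsto_rabs)
    qed
    have "((\<lambda>y. a y * ln (b y)) \<longlongrightarrow> 0) (at x within S)"
    proof (rule Lim_null_comparison)
      have bound: "norm (a y * ln (b y)) \<le> C * \<bar>b y * ln (b y)\<bar>" if y: "y \<in> S" for y
      proof (cases "b y = 0")
        case True
        then show ?thesis by simp
      next
        case False
        hence "b y > 0" using b01[OF y] by auto
        have "norm (a y * ln (b y)) = a y * \<bar>ln (b y)\<bar>" using ab[OF y] by (simp add: abs_mult)
        also have "\<dots> \<le> C * b y * \<bar>ln (b y)\<bar>" using ab[OF y] by (intro mult_right_mono) auto
        also have "\<dots> = C * \<bar>b y * ln (b y)\<bar>" using \<open>b y > 0\<close> by (simp add: abs_mult)
        finally show ?thesis .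
      qed
      show "\<forall>\<^sub>F y in at x within S. norm (a y * ln (b y)) \<le> C * \<bar>b y * ln (b y)\<bar>"
        unfolding eventually_at_filter using bound by (auto intro!: always_eventually)
      show "((\<lambda>y. C * \<bar>b y * ln (b y)\<bar>) \<longlongrightarrow> 0) (at x within S)" using lim True by simp
    qed
    thus ?thesis using True ax by (simp add: continuous_within)
  qed
  thus ?thesis by (simp add: continuous_on_eq_continuous_within)
qed

lemma nz1: "1 + (x::real)^2 \<noteq> 0" "2 + 2 * (x::real)^2 \<noteq> 0" "(1 + (x::real)^2)^2 \<noteq> 0" "1 + (x::real)^2 > 0"
  by (simp_all add: add_pos_nonneg add_nonneg_eq_0_iff)

lemma zeta_deriv: "((\<lambda>t. (1 - cos t)^2 / (2 * (1 + (cos t)^2))) has_real_derivative (sin t)^3 / (1 + (cos t)^2)^2) (at t)"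
proof -
  obtain d where d: "1 + (cos t)^2 = d" by simp
  have dnz: "d \<noteq> 0" using nz1(1)[of "cos t"] d by simp
  show ?thesis
    apply (rule derivative_eq_intros refl nz1)+
    apply (simp_all only: d)
    using dnz apply simp
    apply (simp add: field_simps dnz)
    apply (insert sin_cos_squared_add[of t] d)
    by algebra
qed

lemma Q_deriv: "((\<lambda>t. 2 * cos t * (sin t)^2 / (1 + (cos t)^2)) has_real_derivative 2 * sin t - 4 * ((sin t)^3 / (1 + (cos t)^2)^2)) (at t)"
proof -
  obtain d where d: "1 + (cos t)^2 = d" by simp
  have dnz: "d \<noteq> 0" using nz1(1)[of "cos t"] d by simp
  show ?thesis
    apply (rule derivative_eq_intros refl nz1)+
    apply (simp_all only: d)
    using dnz apply simp_all
    apply (simp add: field_simps dnz)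
    apply (insert sin_cos_squared_add[of t] d)
    by algebra
qed

lemma K_deriv: "((\<lambda>t. -(2 * cos t * ln (1 + (cos t)^2) / (1 + (cos t)^2) - cos t + cos t / (1 + (cos t)^2))) has_real_derivative
   ((cos t)^2 * (sin t)^3 / (1 + (cos t)^2)^2 + 2 * ln (1 + (cos t)^2) * ((sin t)^3 / (1 + (cos t)^2)^2))) (at t)"
proof -
  obtain d where d: "1 + (cos t)^2 = d" by simp
  have dnz: "d \<noteq> 0" using nz1(1)[of "cos t"] d by simp
  show ?thesis
    apply (rule derivative_eq_intros refl nz1)+
    apply (simp_all only: d)
    using dnz apply simp_all
    apply (simp add: field_simps dnz)
    apply (insert sin_cos_squared_add[of t] d)
    by algebra
qed

lemma lnc_deriv: "((\<lambda>t. ln (1 + (cos t)^2)) has_real_derivative - 2 * cos t * sin t / (1 + (cos t)^2)) (at t)"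
proof -
  obtain d where d: "1 + (cos t)^2 = d" by simp
  have dnz: "d \<noteq> 0" using nz1(1)[of "cos t"] d by simp
  show ?thesis
    apply (rule derivative_eq_intros refl nz1)+
    apply (simp_all only: d)
    using dnz by simp_all
qed

lemma Phi_deriv:
  assumes dY: "(Y has_real_derivative Yd) (at t)" and dz: "(z has_real_derivative zd) (at t)"
    and b: "0 < Y t" "Y t < 1" "0 < z t" "z t < 1"
  shows "((\<lambda>t. (Y t - z t) + Y t * ln (z t) - Y t * ln (Y t) + (1 - Y t) * ln (1 - Y t) - (1 - Y t) * ln (1 - z t)) has_real_derivative
     (-1 - (ln (Y t) + ln (1 - Y t) - ln (z t) - ln (1 - z t))) * Yd + (-1 + Y t / z t + (1 - Y t)/(1 - z t)) * zd) (at t)"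
proof -
  have nz: "Y t \<noteq> 0" "z t \<noteq> 0" "1 - Y t \<noteq> 0" "1 - z t \<noteq> 0" using b by auto
  have b': "0 < 1 - Y t" "0 < 1 - z t" using b by auto
  show ?thesis
    apply (rule derivative_eq_intros refl dY dz b b')+
    using b apply simp_all
    using nz apply (simp add: field_simps)
    done
qed

lemma sin3_int_gen:
  fixes a b :: real
  assumes "a \<le> b"
  shows "((\<lambda>t. sin t ^ 3) has_integral ((- cos b + cos b ^ 3 / 3) - (- cos a + cos a ^ 3 / 3))) {a..b}"
proof (rule fundamental_theorem_of_calculus[OF assms])
  fix t assume "t \<in> {a..b}"
  have "((\<lambda>t. - cos t + cos t ^ 3 / 3) has_real_derivative (sin t ^ 3)) (at t)"
    apply (auto intro!: derivative_eq_intros simp: power2_eq_square power3_eq_cube)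
    using sin_cos_squared_add3[of t] by algebra
  then show "((\<lambda>t. - cos t + cos t ^ 3 / 3) has_vector_derivative sin t ^ 3) (at t within {a..b})"
    by (simp add: has_real_derivative_iff_has_vector_derivative[symmetric] has_field_derivative_at_within)
qed

lemma G_le: fixes c :: real assumes "-1 \<le> c" "c \<le> 1"
  shows "(1-c)^2 * (2+c) / 3 \<le> 4 * ((1 - c)^2 / (2 * (1 + c^2)))"
proof -
  have c2: "1 + c^2 > 0" by (simp add: add_pos_nonneg)
  have "(2+c) * (1+c^2) \<le> 6"
  proof -
    have "6 - (2+c) * (1+c^2) = (1-c) * (4 + 3*c + c^2)" by algebra
    moreover have "4 + 3*c + c^2 \<ge> 0"
    proof -
      have "4 + 3*c + c^2 = (c + 3/2)^2 + 7/4" by (simp add: power2_eq_square algebra_simps)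
      moreover have "(c + 3/2)^2 \<ge> 0" by simp
      ultimately show ?thesis by linarith
    qed
    ultimately show ?thesis using assms by (smt (verit) mult_nonneg_nonneg)
  qed
  hence "(1-c)^2 * ((2+c) * (1+c^2)) \<le> (1-c)^2 * 6" by (intro mult_left_mono) auto
  thus ?thesis using c2 by (simp add: field_simps)
qed

theorem lemma3:
  fixes s w :: "real \<Rightarrow> real"
  assumes "regular_axisym s" and "regular_axisym w"
    and "mass_integrand s w integrable_on {0..pi}"
    and "deriv w 0 = 0" and "deriv w pi = 0"
    and "(w pi - w 0) / 8 \<noteq> 0"
  shows "mass_functional s w \<ge> 8 * (ln (2 * \<bar>(w pi - w 0) / 8\<bar>) + 1)"
proof -
  note ds = reg_deriv[OF assms(1)] and dw = reg_deriv[OF assms(2)]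
  note cs = reg_cont(1)[OF assms(1)] and cds = reg_cont(2)[OF assms(1)]
  define e where "e = (\<lambda>t. exp (2 * s t) * sin t ^ 3)"
  have ce: "continuous_on {0..pi} e" unfolding e_def using cs by (intro continuous_intros)
  have cex: "continuous_on {0..pi} (\<lambda>t. exp (2 * s t))" using cs by (intro continuous_intros)
  obtain t1 where t1: "t1 \<in> {0..pi}" "\<And>y. y \<in> {0..pi} \<Longrightarrow> exp (2 * s t1) \<le> exp (2 * s y)"
    using continuous_attains_inf[OF compact_Icc _ cex] by auto
  obtain t2 where t2: "t2 \<in> {0..pi}" "\<And>y. y \<in> {0..pi} \<Longrightarrow> exp (2 * s y) \<le> exp (2 * s t2)"
    using continuous_attains_sup[OF compact_Icc _ cex] by auto
  define mn where "mn = exp (2 * s t1)"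
  define mx where "mx = exp (2 * s t2)"
  have mn: "mn > 0" unfolding mn_def by simp
  have mnmx: "\<And>t. t \<in> {0..pi} \<Longrightarrow> mn \<le> exp (2 * s t) \<and> exp (2 * s t) \<le> mx"
    using t1 t2 unfolding mn_def mx_def by auto
  define g where "g = (\<lambda>t::real. - cos t + cos t ^ 3 / 3)"
  have sin3: "\<And>a b. a \<le> b \<Longrightarrow> ((\<lambda>t. sin t ^ 3) has_integral (g b - g a)) {a..b}"
    unfolding g_def by (rule sin3_int_gen)
  have ebound: "\<And>a b. 0 \<le> a \<Longrightarrow> a \<le> b \<Longrightarrow> b \<le> pi \<Longrightarrow>
     mn * (g b - g a) \<le> integral {a..b} e \<and> integral {a..b} e \<le> mx * (g b - g a)"
  proof -
    fix a b :: real assume ab: "0 \<le> a" "a \<le> b" "b \<le> pi"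
    have sub: "{a..b} \<subseteq> {0..pi}" using ab by auto
    have ie: "(e has_integral integral {a..b} e) {a..b}"
      by (rule integrable_integral, rule integrable_continuous_interval, rule continuous_on_subset[OF ce sub])
    have sn: "\<And>t. t \<in> {a..b} \<Longrightarrow> sin t ^ 3 \<ge> 0" using sub by (auto intro!: sin_ge_zero)
    show "mn * (g b - g a) \<le> integral {a..b} e \<and> integral {a..b} e \<le> mx * (g b - g a)"
    proof
      show "mn * (g b - g a) \<le> integral {a..b} e"
        using has_integral_mult_right[OF sin3[OF ab(2)], of mn] ie
        by (rule has_integral_le) (use sn mnmx sub in \<open>auto simp: e_def intro!: mult_right_mono\<close>)
      show "integral {a..b} e \<le> mx * (g b - g a)"
        using ie has_integral_mult_right[OF sin3[OF ab(2)], of mx]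
        by (rule has_integral_le) (use sn mnmx sub in \<open>auto simp: e_def intro!: mult_right_mono\<close>)
    qed
  qed
  define H where "H = (\<lambda>x. integral {0..x} e)"
  define A where "A = H pi"
  have gpi: "g pi - g 0 = 4/3" unfolding g_def by simp
  have Apos: "A > 0"
  proof -
    have "mn * (g pi - g 0) \<le> A" using ebound[of 0 pi] unfolding A_def H_def by auto
    thus ?thesis using mn gpi by simp
  qed
  have Hsplit: "H x + integral {x..pi} e = A" if "x \<in> {0..pi}" for x
    unfolding H_def A_def using that
    using Henstock_Kurzweil_Integration.integral_combine[of 0 x pi e] integrable_continuous_interval[OF ce] by auto
  define Y where "Y = (\<lambda>x. H x / A)"
  define z where "z = (\<lambda>t::real. (1 - cos t)^2 / (2 * (1 + (cos t)^2)))"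
  define C where "C = 4 * mx / A"
  have mxpos: "mx > 0" unfolding mx_def by simp
  have Cpos: "C > 0" unfolding C_def using mxpos Apos by simp
  have gG: "g x - g 0 = (1 - cos x)^2 * (2 + cos x) / 3" for x
    unfolding g_def by (simp add: field_simps power2_eq_square power3_eq_cube)
  have gG2: "g pi - g x = (1 - (- cos x))^2 * (2 + (- cos x)) / 3" for x
    unfolding g_def by (simp add: field_simps power2_eq_square power3_eq_cube)
  have cb: "-1 \<le> cos x" "cos x \<le> 1" for x :: real by simp_all
  have z1: "1 - z x = (1 - (- cos x))^2 / (2 * (1 + (- cos x)^2))" for x
    unfolding z_def using nz1(1)[of "cos x"] by (simp add: field_simps power2_eq_square)
  have zb: "0 \<le> z x \<and> z x \<le> 1" for x
  proof -
    have "0 \<le> 1 - z x" unfolding z1 by (simp add: add_pos_nonneg)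
    moreover have "0 \<le> z x" unfolding z_def by (simp add: add_pos_nonneg)
    ultimately show ?thesis by simp
  qed
  have gz: "g x - g 0 \<le> 4 * z x" for x unfolding gG z_def using G_le[OF cb] by simp
  have gz2: "g pi - g x \<le> 4 * (1 - z x)" for x unfolding gG2 z1 using G_le[of "- cos x"] cb[of x] by simp
  have g0: "0 \<le> g x - g 0" for x
  proof -
    have "0 \<le> 2 + cos x" using cos_ge_minus_one[of x] by linarith
    thus ?thesis unfolding gG by simp
  qed
  have g02: "0 \<le> g pi - g x" for x
  proof -
    have "0 \<le> 2 + - cos x" using cos_le_one[of x] by linarith
    thus ?thesis unfolding gG2 by simp
  qed
  have H1: "mn * (g x - g 0) \<le> H x \<and> H x \<le> mx * (g x - g 0)" if "x \<in> {0..pi}" for x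
    unfolding H_def using ebound[of 0 x] that by auto
  have H2: "mn * (g pi - g x) \<le> A - H x \<and> A - H x \<le> mx * (g pi - g x)" if "x \<in> {0..pi}" for x
    using ebound[of x pi] that Hsplit[OF that] by auto
  have Yb: "0 \<le> Y x \<and> Y x \<le> C * z x \<and> 0 \<le> 1 - Y x \<and> 1 - Y x \<le> C * (1 - z x)" if x: "x \<in> {0..pi}" for x
  proof -
    have "0 \<le> H x" using H1[OF x] g0[of x] mn by (smt (verit) mult_nonneg_nonneg)
    moreover have "H x \<le> mx * (4 * z x)" using H1[OF x] gz[of x] mxpos by (smt (verit) mult_left_mono)
    moreover have "0 \<le> A - H x" using H2[OF x] g02[of x] mn by (smt (verit) mult_nonneg_nonneg)
    moreover have "A - H x \<le> mx * (4 * (1 - z x))" using H2[OF x] gz2[of x] mxpos by (smt (verit) mult_left_mono)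
    moreover have "1 - Y x = (A - H x) / A" unfolding Y_def using Apos by (simp add: field_simps)
    ultimately have h: "0 \<le> H x" "H x \<le> mx * (4 * z x)" "0 \<le> A - H x" "A - H x \<le> mx * (4 * (1 - z x))"
      "1 - Y x = (A - H x) / A" by auto
    have "Y x \<le> mx * (4 * z x) / A" unfolding Y_def using divide_right_mono[OF h(2), of A] Apos by simp
    moreover have "1 - Y x \<le> mx * (4 * (1 - z x)) / A" unfolding h(5) using divide_right_mono[OF h(4), of A] Apos by simp
    moreover have "0 \<le> Y x" unfolding Y_def using h(1) Apos by simp
    moreover have "0 \<le> 1 - Y x" unfolding h(5) using h(3) Apos by simp
    ultimately show ?thesis unfolding C_def by (simp add: field_simps)
  qed
  have cint: "-1 < cos x \<and> cos x < 1" if "x \<in> {0<..<pi}" for x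
    using cos_monotone_0_pi[of 0 x] cos_monotone_0_pi[of x pi] that by auto
  have Yint: "0 < Y x \<and> Y x < 1" if x: "x \<in> {0<..<pi}" for x
  proof -
    have x': "x \<in> {0..pi}" using x by auto
    have "0 < (1 - cos x)^2" "0 < 2 + cos x" "0 < (1 - (- cos x))^2" "0 < 2 + - cos x" using cint[OF x] by auto
    hence "0 < g x - g 0" "0 < g pi - g x" unfolding gG gG2 by simp_all
    hence "0 < H x" "0 < A - H x" using H1[OF x'] H2[OF x'] mn by (smt (verit) mult_pos_pos)+
    thus ?thesis unfolding Y_def using Apos by (simp add: field_simps)
  qed
  have zint: "0 < z x \<and> z x < 1" if x: "x \<in> {0<..<pi}" for x
  proof -
    have a: "0 < (1 - cos x)^2" "0 < (1 - (- cos x))^2" using cint[OF x] by auto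
    have b: "0 < 2 * (1 + (cos x)^2)" "0 < 2 * (1 + (- cos x)^2)" using nz1(4)[of "cos x"] by simp_all
    have "0 < z x" unfolding z_def using divide_pos_pos[OF a(1) b(1)] .
    moreover have "0 < 1 - z x" unfolding z1 using divide_pos_pos[OF a(2) b(2)] .
    ultimately have "0 < z x" "0 < 1 - z x" by auto
    thus ?thesis by simp
  qed
  have Y0: "Y 0 = 0" unfolding Y_def H_def by simp
  have Ypi: "Y pi = 1" unfolding Y_def A_def using Apos A_def by simp
  have z0: "z 0 = 0" unfolding z_def by simp
  have zpi: "z pi = 1" unfolding z_def by simp
  have dH: "(H has_real_derivative e x) (at x within {0..pi})" if "x \<in> {0..pi}" for x
    unfolding H_def by (rule integral_has_real_derivative[OF ce that])
  have cY: "continuous_on {0..pi} Y"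
  proof -
    have "continuous_on {0..pi} H" 
      using dH DERIV_continuous continuous_on_eq_continuous_within by blast
    thus ?thesis unfolding Y_def using Apos by (intro continuous_intros) auto
  qed
  have dY: "(Y has_real_derivative e x / A) (at x)" if x: "x \<in> {0<..<pi}" for x
  proof -
    have "(H has_real_derivative e x) (at x)"
      using dH[of x] x at_within_interior[of x "{0..pi}"] by auto
    thus ?thesis unfolding Y_def using Apos by (auto intro!: derivative_eq_intros)
  qed
  have cz: "continuous_on {0..pi} z" unfolding z_def using nz1(2) by (intro continuous_intros) auto
  define Phi where "Phi = (\<lambda>t. (Y t - z t) + Y t * ln (z t) - Y t * ln (Y t) + (1 - Y t) * ln (1 - Y t) - (1 - Y t) * ln (1 - z t))"
  define u where "u = (\<lambda>t. 2 * s t + 2 * ln (1 + (cos t)^2))"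
  define Q where "Q = (\<lambda>t::real. 2 * cos t * (sin t)^2 / (1 + (cos t)^2))"
  define B where "B = (\<lambda>t. u t * (Y t - z t) + Phi t - (1/2) * s t * Q t)"
  define zd where "zd = (\<lambda>t::real. (sin t)^3 / (1 + (cos t)^2)^2)"
  define Bd where "Bd = (\<lambda>t. (2 * deriv s t - 4 * cos t * sin t / (1 + (cos t)^2)) * (Y t - z t)
     + (2 * s t + 2 * ln (1 + (cos t)^2)) * (e t / A - zd t)
     + (-1 - (ln (Y t) + ln (1 - Y t) - ln (z t) - ln (1 - z t))) * (e t / A)
     + (-1 + Y t / z t + (1 - Y t) / (1 - z t)) * zd t
     - (1/2) * deriv s t * Q t - (1/2) * s t * (2 * sin t - 4 * zd t))"
  have cPhi: "continuous_on {0..pi} Phi"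
  proof -
    have c1: "continuous_on {0..pi} (\<lambda>t. Y t * ln (z t))"
      by (rule alnb_cont[OF cY cz, of C]) (use Cpos Yb zb in auto)
    have c2: "continuous_on {0..pi} (\<lambda>t. Y t * ln (Y t))"
      by (rule alnb_cont[OF cY cY, of 1]) (use Yb in auto)
    have c1Y: "continuous_on {0..pi} (\<lambda>t. 1 - Y t)" using cY by (intro continuous_intros)
    have c1z: "continuous_on {0..pi} (\<lambda>t. 1 - z t)" using cz by (intro continuous_intros)
    have c3: "continuous_on {0..pi} (\<lambda>t. (1 - Y t) * ln (1 - Y t))"
      by (rule alnb_cont[OF c1Y c1Y, of 1]) (use Yb in auto)
    have c4: "continuous_on {0..pi} (\<lambda>t. (1 - Y t) * ln (1 - z t))"
      by (rule alnb_cont[OF c1Y c1z, of C]) (use Cpos Yb zb in auto)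
    show ?thesis unfolding Phi_def using cY cz c1 c2 c3 c4 by (intro continuous_on_diff continuous_on_add c1 c2 c3 c4 cY cz)
  qed
  have cu: "continuous_on {0..pi} u" unfolding u_def using cs nz1(4)
    by (intro continuous_intros continuous_on_ln) (auto simp: nz1(1))
  have cQ: "continuous_on {0..pi} Q" unfolding Q_def using nz1(1) by (intro continuous_intros) auto
  have cB: "continuous_on {0..pi} B" unfolding B_def using cu cY cz cPhi cs cQ by (intro continuous_intros)
  have B0: "B 0 = 0" unfolding B_def Phi_def Q_def using Y0 z0 by simp
  have Bpi: "B pi = 0" unfolding B_def Phi_def Q_def using Ypi zpi by simp
  have dB: "(B has_real_derivative Bd x) (at x)" if x: "x \<in> {0<..<pi}" for x
  proof -
    have x': "x \<in> {0..pi}" using x by auto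
    have dz: "(z has_real_derivative zd x) (at x)" unfolding z_def zd_def by (rule zeta_deriv)
    have du: "(u has_real_derivative (2 * deriv s x + 2 * (- 2 * cos x * sin x / (1 + (cos x)^2)))) (at x)"
      unfolding u_def by (intro DERIV_add DERIV_cmult ds[OF x'] lnc_deriv)
    have dP: "(Phi has_real_derivative ((-1 - (ln (Y x) + ln (1 - Y x) - ln (z x) - ln (1 - z x))) * (e x / A) 
         + (-1 + Y x / z x + (1 - Y x)/(1 - z x)) * zd x)) (at x)"
      unfolding Phi_def using Phi_deriv[OF dY[OF x] dz] Yint[OF x] zint[OF x] by simp
    have dQ: "(Q has_real_derivative 2 * sin x - 4 * zd x) (at x)" unfolding Q_def zd_def by (rule Q_deriv)
    show ?thesis unfolding B_def Bd_def
      apply (rule derivative_eq_intros refl du dY[OF x] dz dP dQ ds[OF x'])+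
      by (simp add: algebra_simps u_def add_divide_distrib)
  qed
  have BI: "(Bd has_integral 0) {0..pi}"
    using fundamental_theorem_of_calculus_interior[of 0 pi B Bd] cB dB B0 Bpi
    by (simp add: has_real_derivative_iff_has_vector_derivative)
  define kd where "kd = (\<lambda>t::real. (cos t)^2 * (sin t)^3 / (1 + (cos t)^2)^2 + 2 * ln (1 + (cos t)^2) * ((sin t)^3 / (1 + (cos t)^2)^2))"
  define K where "K = (\<lambda>t::real. -(2 * cos t * ln (1 + (cos t)^2) / (1 + (cos t)^2) - cos t + cos t / (1 + (cos t)^2)))"
  have KI: "(kd has_integral (2 * ln 2 - 1)) {0..pi}"
  proof -
    have "(kd has_integral (K pi - K 0)) {0..pi}"
    proof (rule fundamental_theorem_of_calculus)
      fix x :: real assume "x \<in> {0..pi}"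
      show "(K has_vector_derivative kd x) (at x within {0..pi})"
        unfolding K_def kd_def using K_deriv[of x]
        by (simp add: has_real_derivative_iff_has_vector_derivative[symmetric] has_field_derivative_at_within)
    qed simp
    moreover have "K pi - K 0 = 2 * ln 2 - 1" unfolding K_def by simp
    ultimately show ?thesis by simp
  qed
  note cw = reg_cont(1)[OF assms(2)]
  have WI: "(deriv w has_integral (w pi - w 0)) {0..pi}"
  proof (rule fundamental_theorem_of_calculus)
    fix x :: real assume x: "x \<in> {0..pi}"
    show "(w has_vector_derivative deriv w x) (at x within {0..pi})"
      using dw[OF x] by (simp add: has_real_derivative_iff_has_vector_derivative[symmetric] has_field_derivative_at_within)
  qed simp
  have EI: "(e has_integral A) {0..pi}" unfolding A_def H_def
    by (rule integrable_integral, rule integrable_continuous_interval[OF ce])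
  define k where "k = (w pi - w 0) / A"
  define h where "h = (\<lambda>t. (4 * ln A / A) * e t - 4 * kd t - 4 * Bd t + (2 * k) * deriv w t - k^2 * e t)"
  define V where "V = (4 * ln A / A) * A - 4 * (2 * ln 2 - 1) - 4 * 0 + (2 * k) * (w pi - w 0) - k^2 * A"
  have hI: "(h has_integral V) {0..pi}" unfolding h_def V_def
    by (intro has_integral_diff has_integral_add has_integral_mult_right EI KI BI WI)
  define h' where "h' = (\<lambda>t. if t \<in> {0<..<pi} then h t else mass_integrand s w t)"
  have hI': "(h' has_integral V) {0..pi}"
    using hI has_integral_spike_finite_eq[of "{0, pi}" "{0..pi}" h' h V] unfolding h'_def by auto
  have pw: "h' x \<le> mass_integrand s w x" if x: "x \<in> {0..pi}" for x
  proof (cases "x \<in> {0<..<pi}")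
    case False
    then show ?thesis unfolding h'_def by auto
  next
    case True
    have snp: "sin x > 0" using True by (auto intro!: sin_gt_zero)
    have k1: "4 * ln A * (e x / A) \<le> (deriv s x)^2 * sin x + 4 * s x * sin x + 4 * kd x + 4 * Bd x"
    proof -
      have sc: "(sin x)^2 + (cos x)^2 = 1" by simp
      have zx: "z x = (1 - cos x)^2 / (2 * (1 + (cos x)^2))" unfolding z_def ..
      have px: "e x / A = exp (2 * s x) * (sin x)^3 / A" unfolding e_def ..
      have Yi: "0 < Y x" "Y x < 1" using Yint[OF True] by auto
      have zi: "0 < z x" "z x < 1" using zint[OF True] by auto
      note kk = key_ineq[OF snp sc Yi zi Apos zx px, of "deriv s x"]
      show ?thesis unfolding Bd_def zd_def Q_def kd_def using kk .
    qed
    have ep: "e x > 0" unfolding e_def using snp by simp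
    have eta2: "(eta_fun s x)^2 = e x * sin x"
    proof -
      have "(exp (s x))^2 = exp (2 * s x)" by (simp add: exp_double)
      thus ?thesis unfolding eta_fun_def e_def by (simp add: power_mult_distrib power2_eq_square power3_eq_cube)
    qed
    have k2: "2 * k * deriv w x - k^2 * e x \<le> (deriv w x)^2 / (eta_fun s x)^2 * sin x"
    proof -
      have "(deriv w x)^2 / (eta_fun s x)^2 * sin x = (deriv w x)^2 / e x" unfolding eta2 using snp by simp
      moreover have "(deriv w x)^2 / e x - (2 * k * deriv w x - k^2 * e x) = (deriv w x - k * e x)^2 / e x"
        using ep by (simp add: field_simps power2_eq_square)
      moreover have "(deriv w x - k * e x)^2 / e x \<ge> 0" using ep by simp
      ultimately show ?thesis by linarith
    qed
    have "h' x = h x" unfolding h'_def using True by simp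
    also have "\<dots> = 4 * ln A * (e x / A) - 4 * kd x - 4 * Bd x + (2 * k * deriv w x - k^2 * e x)"
      unfolding h_def by simp
    also have "\<dots> \<le> ((deriv s x)^2 + 4 * s x + (deriv w x)^2 / (eta_fun s x)^2) * sin x"
    proof -
      have "((deriv s x)^2 + 4 * s x + (deriv w x)^2 / (eta_fun s x)^2) * sin x
          = (deriv s x)^2 * sin x + 4 * s x * sin x + (deriv w x)^2 / (eta_fun s x)^2 * sin x"
        by (simp only: distrib_right)
      thus ?thesis using k1 k2 by linarith
    qed
    finally show ?thesis unfolding mass_integrand_def .
  qed
  have MV: "V \<le> mass_functional s w"
    unfolding mass_functional_def by (rule has_integral_le[OF hI' integrable_integral[OF assms(3)] pw])
  define D where "D = w pi - w 0"
  have Dnz: "D \<noteq> 0" using assms(6) unfolding D_def by simp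
  define r where "r = D^2 / (4 * A)"
  have rpos: "r > 0" unfolding r_def using Dnz Apos by simp
  have V': "V = 4 * ln A - 8 * ln 2 + 4 + 4 * r"
    unfolding V_def k_def r_def D_def using Apos by (simp add: field_simps power2_eq_square)
  have t1: "2 * \<bar>(w pi - w 0) / 8\<bar> = \<bar>D\<bar> / 4" unfolding D_def by simp
  have aD: "\<bar>D\<bar> / 4 > 0" using Dnz by simp
  have sq: "(\<bar>D\<bar> / 4)^2 = r * A / 4" unfolding r_def using Apos by (simp add: field_simps power2_eq_square)
  have "2 * ln (\<bar>D\<bar> / 4) = ln ((\<bar>D\<bar> / 4)^2)" using aD by (simp add: ln_realpow)
  also have "\<dots> = ln r + ln A - ln 4" unfolding sq using rpos Apos by (simp add: ln_mult ln_div)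
  also have "ln (4::real) = 2 * ln 2"
  proof -
    have "ln (4::real) = ln 2 + ln 2" using ln_mult[of "2::real" 2] by simp
    thus ?thesis by simp
  qed
  finally have l1: "2 * ln (\<bar>D\<bar> / 4) = ln r + ln A - 2 * ln 2" .
  have l2: "ln r \<le> r - 1" using rpos by (rule ln_le_minus_one)
  have "8 * (ln (2 * \<bar>(w pi - w 0) / 8\<bar>) + 1) \<le> V" unfolding t1 V' using l1 l2 by (simp add: algebra_simps)
  thus ?thesis using MV by linarith
qed

end
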